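(* Let $I$ be an open interval of real numbers and let $U$ be a subgroup of $\mathrm{Homeo}^+(I)$ such that: (1) the commutator subgroup $[U,U]$ acts freely on $I$ (i.e., every non-identity element of $[U,U]$ has no fixed point in $I$); and (2) each non-identity member of $U$ has at most one fixed point in $I$. Then for every nonempty set $S$ there exists a good $U$-anonymous $S$-predictor on $I$.
   Context: $\mathrm{Homeo}^+(I)$ is the group (under composition) of increasing homeomorphisms of $I$. Write $a=\inf I$ (possibly $-\infty$). For a nonempty set $S$, let ${}^I S$ be the set of total functions $I\to S$, and let $\mathcal{D}$ be the set of all functions $f$ with values in $S$ whose domain is $(a,t_f)$ for some $t_f\in I$. An $S$-predictor on $I$ is any function $\mathcal{P}:\mathcal{D}\to S$. It is good if for every $F\in {}^I S$ the set $\{t\in I : \mathcal{P}(F|_{(a,t)})\neq F(t)\}$ has Lebesgue measure zero. For $f\in\mathcal{D}$ and $\varphi\in\mathrm{Homeo}^+(I)$, $f\circ\varphi$ is the function with domain $(a,\varphi^{-1}(t_f))$. For $U\subseteq \mathrm{Homeo}^+(I)$, $\mathcal{P}$ is $U$-anonymous if $\mathcal{P}(f)=\mathcal{P}(f\circ\varphi)$ for all $f\in\mathcal{D}$ and all $\varphi\in U$. The commutator subgroup $[U,U]$ is the subgroup generated by all elements $\alpha\beta\alpha^{-1}\beta^{-1}$ with $\alpha,\beta\in U$. (The Axiom of Choice is assumed.) *)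

theory Defs
  imports "HOL-Analysis.Analysis"
begin

(* Homeo^+(I): increasing homeomorphisms of I, represented extensionally
   (identity outside I), so that the group operation is plain composition
   and the inverse is inv. *)
definition homeo_plus :: "real set \<Rightarrow> (real \<Rightarrow> real) set" where
  "homeo_plus I = {\<phi>. bij_betw \<phi> I I \<and> strict_mono_on I \<phi> \<and> continuous_on I \<phi>
                        \<and> (\<forall>x. x \<notin> I \<longrightarrow> \<phi> x = x)}"

definition is_subgroup_homeo :: "real set \<Rightarrow> (real \<Rightarrow> real) set \<Rightarrow> bool" where
  "is_subgroup_homeo I U \<longleftrightarrow> U \<subseteq> homeo_plus I \<and> id \<in> U
     \<and> (\<forall>\<alpha>\<in>U. \<forall>\<beta>\<in>U. \<alpha> \<circ> \<beta> \<in> U) \<and> (\<forall>\<alpha>\<in>U. inv \<alpha> \<in> U)"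

inductive_set commutator_subgroup :: "(real \<Rightarrow> real) set \<Rightarrow> (real \<Rightarrow> real) set"
  for U :: "(real \<Rightarrow> real) set" where
  comm_id: "id \<in> commutator_subgroup U"
| comm_gen: "\<alpha> \<in> U \<Longrightarrow> \<beta> \<in> U \<Longrightarrow> \<alpha> \<circ> \<beta> \<circ> inv \<alpha> \<circ> inv \<beta> \<in> commutator_subgroup U"
| comm_comp: "g \<in> commutator_subgroup U \<Longrightarrow> h \<in> commutator_subgroup U \<Longrightarrow> g \<circ> h \<in> commutator_subgroup U"
| comm_inv: "g \<in> commutator_subgroup U \<Longrightarrow> inv g \<in> commutator_subgroup U"

definition pred_domain :: "real set \<Rightarrow> 's set \<Rightarrow> (real \<rightharpoonup> 's) set" where
  "pred_domain I S = {f. (\<exists>t\<in>I. dom f = {x\<in>I. x < t}) \<and> ran f \<subseteq> S}"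

definition restr_to :: "real set \<Rightarrow> (real \<Rightarrow> 's) \<Rightarrow> real \<Rightarrow> (real \<rightharpoonup> 's)" where
  "restr_to I F t = (Some \<circ> F) |` {x\<in>I. x < t}"

definition is_predictor :: "real set \<Rightarrow> 's set \<Rightarrow> ((real \<rightharpoonup> 's) \<Rightarrow> 's) \<Rightarrow> bool" where
  "is_predictor I S P \<longleftrightarrow> (\<forall>f\<in>pred_domain I S. P f \<in> S)"

definition good_predictor :: "real set \<Rightarrow> 's set \<Rightarrow> ((real \<rightharpoonup> 's) \<Rightarrow> 's) \<Rightarrow> bool" where
  "good_predictor I S P \<longleftrightarrow> is_predictor I S P \<and>
     (\<forall>F. (\<forall>x\<in>I. F x \<in> S) \<longrightarrow> {t\<in>I. P (restr_to I F t) \<noteq> F t} \<in> null_sets lebesgue)"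

(* f \<circ> \<phi> has domain (inf I, \<phi>^{-1}(t_f)) since \<phi> is an increasing bijection of I
   and the identity outside I *)
definition anonymous :: "real set \<Rightarrow> 's set \<Rightarrow> (real \<Rightarrow> real) set \<Rightarrow> ((real \<rightharpoonup> 's) \<Rightarrow> 's) \<Rightarrow> bool" where
  "anonymous I S U P \<longleftrightarrow> (\<forall>f\<in>pred_domain I S. \<forall>\<phi>\<in>U. P f = P (f \<circ> \<phi>))"

end

theory Submission
  imports Defs
begin

lemma homeo_bij:
  assumes "\<phi> \<in> homeo_plus I" shows "bij \<phi>"
proof -
  have b: "bij_betw \<phi> I I" and o: "\<forall>x. x \<notin> I \<longrightarrow> \<phi> x = x"
    using assms by (auto simp: homeo_plus_def)
  have "inj \<phi>"
  proof (rule injI)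
    fix x y assume e: "\<phi> x = \<phi> y"
    show "x = y"
    proof (cases "x \<in> I"; cases "y \<in> I")
      assume "x \<in> I" "y \<in> I" then show ?thesis using b e by (auto simp: bij_betw_def inj_on_def)
    next
      assume "x \<in> I" "y \<notin> I" then show ?thesis using b e o bij_betwE by metis
    next
      assume "x \<notin> I" "y \<in> I" then show ?thesis using b e o bij_betwE by metis
    next
      assume "x \<notin> I" "y \<notin> I" then show ?thesis using e o by auto
    qed
  qed
  moreover have "surj \<phi>"
  proof -
    { fix z have "z \<in> range \<phi>"
      proof (cases "z \<in> I")
        case True then show ?thesis using b by (metis bij_betw_imp_surj_on rangeI image_iff)
      next
        case False then show ?thesis using o by (metis rangeI)
      qed }
    then show ?thesis by auto
  qed
  ultimately show ?thesis by (simp add: bij_def)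
qed

locale setting =
  fixes I :: "real set" and U :: "(real \<Rightarrow> real) set"
  assumes opI: "open I" and ivI: "is_interval I" and neI: "I \<noteq> {}"
    and sub: "is_subgroup_homeo I U"
    and free: "\<forall>g\<in>commutator_subgroup U. g \<noteq> id \<longrightarrow> (\<forall>x\<in>I. g x \<noteq> x)"
    and uniq: "\<forall>g\<in>U. g \<noteq> id \<longrightarrow> (\<forall>x\<in>I. \<forall>y\<in>I. g x = x \<and> g y = y \<longrightarrow> x = y)"
begin

lemma U_homeo: "\<phi> \<in> U \<Longrightarrow> \<phi> \<in> homeo_plus I" using sub by (auto simp: is_subgroup_homeo_def)
lemma U_id: "id \<in> U" using sub by (auto simp: is_subgroup_homeo_def)
lemma U_comp: "\<alpha> \<in> U \<Longrightarrow> \<beta> \<in> U \<Longrightarrow> \<alpha> \<circ> \<beta> \<in> U" using sub by (auto simp: is_subgroup_homeo_def)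
lemma U_inv: "\<alpha> \<in> U \<Longrightarrow> inv \<alpha> \<in> U" using sub by (auto simp: is_subgroup_homeo_def)

lemma U_bij: "\<phi> \<in> U \<Longrightarrow> bij \<phi>" using U_homeo homeo_bij by blast
lemma U_inv_f: "\<phi> \<in> U \<Longrightarrow> inv \<phi> (\<phi> x) = x" using U_bij bij_is_inj inv_f_f by metis
lemma U_f_inv: "\<phi> \<in> U \<Longrightarrow> \<phi> (inv \<phi> x) = x" using U_bij bij_is_surj surj_f_inv_f by metis
lemma U_in: "\<phi> \<in> U \<Longrightarrow> x \<in> I \<Longrightarrow> \<phi> x \<in> I"
  using U_homeo by (auto simp: homeo_plus_def bij_betw_def)
lemma U_out: "\<phi> \<in> U \<Longrightarrow> x \<notin> I \<Longrightarrow> \<phi> x = x"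
  using U_homeo by (auto simp: homeo_plus_def)
lemma U_mono: "\<phi> \<in> U \<Longrightarrow> x \<in> I \<Longrightarrow> y \<in> I \<Longrightarrow> x < y \<Longrightarrow> \<phi> x < \<phi> y"
  using U_homeo by (auto simp: homeo_plus_def strict_mono_on_def)
lemma U_less_iff: "\<phi> \<in> U \<Longrightarrow> x \<in> I \<Longrightarrow> y \<in> I \<Longrightarrow> \<phi> x < \<phi> y \<longleftrightarrow> x < y"
  by (metis U_mono not_less_iff_gr_or_eq)
lemma U_le_iff: "\<phi> \<in> U \<Longrightarrow> x \<in> I \<Longrightarrow> y \<in> I \<Longrightarrow> \<phi> x \<le> \<phi> y \<longleftrightarrow> x \<le> y"
  by (metis U_less_iff not_le)
lemma U_eq_iff: "\<phi> \<in> U \<Longrightarrow> \<phi> x = \<phi> y \<longleftrightarrow> x = y"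
  by (metis U_inv_f)
lemma U_inv_in: "\<phi> \<in> U \<Longrightarrow> x \<in> I \<Longrightarrow> inv \<phi> x \<in> I"
  using U_inv U_in by blast
lemma U_cont: "\<phi> \<in> U \<Longrightarrow> continuous_on I \<phi>"
  using U_homeo by (auto simp: homeo_plus_def)
lemma U_isCont: "\<phi> \<in> U \<Longrightarrow> x \<in> I \<Longrightarrow> isCont \<phi> x"
  using U_cont opI continuous_on_eq_continuous_at by blast

lemma interval_sub:
  assumes "u \<in> I" "v \<in> I" shows "{u..v} \<subseteq> I"
proof
  fix x assume "x \<in> {u..v}"
  then have "u \<le> x" "x \<le> v" by auto
  then show "x \<in> I" using assms ivI unfolding is_interval_1 by blast
qed

lemma fixpt_between:
  assumes g: "g \<in> U" and u: "u \<in> I" and v: "v \<in> I" and uv: "u \<le> v"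
    and s: "(u \<le> g u \<and> g v \<le> v) \<or> (g u \<le> u \<and> v \<le> g v)"
  shows "\<exists>p. u \<le> p \<and> p \<le> v \<and> g p = p"
proof -
  have c: "continuous_on {u..v} (\<lambda>x. g x - x)"
  proof -
    have "continuous_on {u..v} g" using continuous_on_subset[OF U_cont[OF g] interval_sub[OF u v]] .
    then show ?thesis by (intro continuous_on_diff continuous_on_id)
  qed
  from s show ?thesis
  proof
    assume "u \<le> g u \<and> g v \<le> v"
    then have "(\<lambda>x. g x - x) v \<le> 0" "0 \<le> (\<lambda>x. g x - x) u" by auto
    from IVT2'[of "\<lambda>x. g x - x", OF this uv c] show ?thesis by auto
  next
    assume "g u \<le> u \<and> v \<le> g v"
    then have "(\<lambda>x. g x - x) u \<le> 0" "0 \<le> (\<lambda>x. g x - x) v" by auto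
    from IVT'[of "\<lambda>x. g x - x", OF this uv c] show ?thesis by auto
  qed
qed

lemma sign_free:
  assumes g: "g \<in> U" and nf: "\<forall>x\<in>I. g x \<noteq> x"
  shows "(\<forall>x\<in>I. g x < x) \<or> (\<forall>x\<in>I. x < g x)"
proof (rule ccontr)
  assume "\<not> ?thesis"
  then obtain x1 x2 where x1: "x1 \<in> I" "\<not> g x1 < x1" and x2: "x2 \<in> I" "\<not> x2 < g x2" by auto
  then have a: "x1 < g x1" "g x2 < x2" using nf by (auto simp: not_less order.order_iff_strict)
  show False
  proof (cases "x1 \<le> x2")
    case True
    from fixpt_between[OF g x1(1) x2(1) True] a obtain p where "x1 \<le> p" "p \<le> x2" "g p = p" by force
    moreover have "p \<in> I" using interval_sub[OF x1(1) x2(1)] calculation by auto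
    ultimately show False using nf by auto
  next
    case False
    then have le: "x2 \<le> x1" by auto
    from fixpt_between[OF g x2(1) x1(1) le] a obtain p where "x2 \<le> p" "p \<le> x1" "g p = p" by force
    moreover have "p \<in> I" using interval_sub[OF x2(1) x1(1)] calculation by auto
    ultimately show False using nf by auto
  qed
qed

abbreviation "K \<equiv> commutator_subgroup U"

lemma K_sub: "g \<in> K \<Longrightarrow> g \<in> U"
proof (induction rule: commutator_subgroup.induct)
  case comm_id then show ?case by (rule U_id)
next
  case (comm_gen a b) then show ?case by (metis U_comp U_inv)
next
  case (comm_comp g h) then show ?case by (metis U_comp)
next
  case (comm_inv g) then show ?case by (metis U_inv)
qed

lemma K_conj: "g \<in> K \<Longrightarrow> u \<in> U \<Longrightarrow> inv u \<circ> g \<circ> u \<in> K"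
proof (induction rule: commutator_subgroup.induct)
  case comm_id
  have "inv u \<circ> id \<circ> u = id" using comm_id by (auto simp: fun_eq_iff U_inv_f U_f_inv)
  then show ?case by (metis commutator_subgroup.comm_id)
next
  case (comm_gen \<alpha> \<beta>)
  let ?a = "inv u \<circ> \<alpha> \<circ> u" and ?b = "inv u \<circ> \<beta> \<circ> u"
  have aU: "?a \<in> U" "?b \<in> U" using comm_gen by (auto intro!: U_comp U_inv)
  have ia: "inv ?a = inv u \<circ> inv \<alpha> \<circ> u"
    using comm_gen by (intro inv_unique_comp) (auto simp: fun_eq_iff U_inv U_inv_f U_f_inv)
  have ib: "inv ?b = inv u \<circ> inv \<beta> \<circ> u"
    using comm_gen by (intro inv_unique_comp) (auto simp: fun_eq_iff U_inv U_inv_f U_f_inv)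
  have "inv u \<circ> (\<alpha> \<circ> \<beta> \<circ> inv \<alpha> \<circ> inv \<beta>) \<circ> u = ?a \<circ> ?b \<circ> inv ?a \<circ> inv ?b"
    unfolding ia ib using comm_gen by (auto simp: fun_eq_iff U_inv_f U_f_inv)
  then show ?case using commutator_subgroup.comm_gen[OF aU] by metis
next
  case (comm_comp g h)
  have "inv u \<circ> (g \<circ> h) \<circ> u = (inv u \<circ> g \<circ> u) \<circ> (inv u \<circ> h \<circ> u)"
    using comm_comp by (auto simp: fun_eq_iff U_inv_f U_f_inv)
  then show ?case using comm_comp commutator_subgroup.comm_comp by metis
next
  case (comm_inv g)
  have gU: "g \<in> U" using comm_inv K_sub by blast
  have "inv (inv u \<circ> g \<circ> u) = inv u \<circ> inv g \<circ> u"
    using comm_inv gU by (intro inv_unique_comp) (auto simp: fun_eq_iff U_inv U_inv_f U_f_inv)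
  then show ?case using comm_inv commutator_subgroup.comm_inv by metis
qed


lemma K_id: "id \<in> K" by (rule commutator_subgroup.comm_id)
lemma K_comp: "g \<in> K \<Longrightarrow> h \<in> K \<Longrightarrow> g \<circ> h \<in> K" by (rule commutator_subgroup.comm_comp)
lemma K_inv: "g \<in> K \<Longrightarrow> inv g \<in> K" by (rule commutator_subgroup.comm_inv)
lemma K_pow: "g \<in> K \<Longrightarrow> g ^^ n \<in> K"
  by (induction n) (auto intro: K_id K_comp)
lemma K_free: "g \<in> K \<Longrightarrow> g \<noteq> id \<Longrightarrow> x \<in> I \<Longrightarrow> g x \<noteq> x" using free by blast
lemma K_gen: "a \<in> U \<Longrightarrow> b \<in> U \<Longrightarrow> a \<circ> b \<circ> inv a \<circ> inv b \<in> K" by (rule commutator_subgroup.comm_gen)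

definition pos :: "(real \<Rightarrow> real) \<Rightarrow> bool" where "pos g \<longleftrightarrow> (\<forall>x\<in>I. x < g x)"
definition lt :: "(real \<Rightarrow> real) \<Rightarrow> (real \<Rightarrow> real) \<Rightarrow> bool" where "lt g h \<longleftrightarrow> (\<forall>x\<in>I. g x < h x)"
definition le :: "(real \<Rightarrow> real) \<Rightarrow> (real \<Rightarrow> real) \<Rightarrow> bool" where "le g h \<longleftrightarrow> (\<forall>x\<in>I. g x \<le> h x)"

lemma trich:
  assumes g: "g \<in> K" and h: "h \<in> K"
  shows "g = h \<or> lt g h \<or> lt h g"
proof -
  have gU: "g \<in> U" and hU: "h \<in> U" using g h K_sub by auto
  let ?d = "inv h \<circ> g"
  have dK: "?d \<in> K" using g h K_inv K_comp by blast
  have dU: "?d \<in> U" using dK K_sub by blast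
  show ?thesis
  proof (cases "?d = id")
    case True
    then have "g = h"
      by (auto simp: fun_eq_iff) (metis U_f_inv hU)
    then show ?thesis by simp
  next
    case False
    then have nf: "\<forall>x\<in>I. ?d x \<noteq> x" using K_free[OF dK] by blast
    from sign_free[OF dU nf] show ?thesis
    proof
      assume a: "\<forall>x\<in>I. ?d x < x"
      have "lt g h" unfolding lt_def
      proof
        fix x assume x: "x \<in> I"
        have "inv h (g x) < x" using a x by auto
        then have "h (inv h (g x)) < h x" using U_mono[OF hU] x gU U_in U_inv_in hU by blast
        then show "g x < h x" using U_f_inv[OF hU] by simp
      qed
      then show ?thesis by simp
    next
      assume a: "\<forall>x\<in>I. x < ?d x"
      have "lt h g" unfolding lt_def
      proof
        fix x assume x: "x \<in> I"
        have "x < inv h (g x)" using a x by auto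
        then have "h x < h (inv h (g x))" using U_mono[OF hU] x gU U_in U_inv_in hU by blast
        then show "h x < g x" using U_f_inv[OF hU] by simp
      qed
      then show ?thesis by simp
    qed
  qed
qed

lemma not_lt_le: "g \<in> K \<Longrightarrow> h \<in> K \<Longrightarrow> \<not> lt h g \<Longrightarrow> le g h"
  using trich[of g h] by (auto simp: lt_def le_def less_imp_le)

lemma pos_ne_id: "pos g \<Longrightarrow> g \<noteq> id"
  using neI by (auto simp: pos_def)

lemma archimedean:
  assumes g: "g \<in> K" and pg: "pos g" and h: "h \<in> K"
  shows "\<exists>n. lt h (g ^^ n)"
proof (rule ccontr)
  assume "\<not> ?thesis"
  then have le: "\<forall>n. le (g ^^ n) h" using not_lt_le K_pow g h by blast
  obtain x0 where x0: "x0 \<in> I" using neI by auto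
  have gU: "g \<in> U" using g K_sub by blast
  define s where "s n = (g ^^ n) x0" for n
  have sI: "s n \<in> I" for n
    by (induction n) (auto simp: s_def x0 U_in[OF gU])
  have sS: "s (Suc n) = g (s n)" for n by (simp add: s_def)
  have inc: "incseq s"
    by (rule incseq_SucI) (use sS sI pg in \<open>auto simp: pos_def less_imp_le\<close>)
  have bd: "s n \<le> h x0" for n using le x0 by (auto simp: le_def s_def)
  have bda: "bdd_above (range s)" using bd unfolding bdd_above_def by auto
  define L where "L = (SUP i. s i)"
  have lim: "s \<longlonglongrightarrow> L" unfolding L_def by (rule LIMSEQ_incseq_SUP[OF bda inc])
  have "s 0 \<le> L" using lim inc by (simp add: incseq_le)
  then have L1: "x0 \<le> L" by (simp add: s_def)
  have L2: "L \<le> h x0" using lim bd by (meson LIMSEQ_le_const2)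
  have hU: "h \<in> U" using h K_sub by blast
  have LI: "L \<in> I" using interval_sub[OF x0 U_in[OF hU x0]] L1 L2 by auto
  have "(\<lambda>n. g (s n)) \<longlonglongrightarrow> g L"
    using isCont_tendsto_compose[OF U_isCont[OF gU LI] lim] .
  moreover have "(\<lambda>n. g (s n)) \<longlonglongrightarrow> L"
    using LIMSEQ_Suc[OF lim] by (simp add: sS)
  ultimately have "g L = L" using LIMSEQ_unique by blast
  then show False using K_free[OF g pos_ne_id[OF pg] LI] by simp
qed

lemma floor_pow:
  assumes h: "h \<in> K" and ph: "pos h" and a: "a \<in> K" and pa: "pos a"
  shows "\<exists>m. le (h ^^ m) a \<and> lt a (h ^^ Suc m)"
proof -
  obtain N where N: "lt a (h ^^ N)" using archimedean[OF h ph a] by blast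
  define M where "M = (LEAST M. lt a (h ^^ M))"
  have M: "lt a (h ^^ M)" unfolding M_def using N by (rule LeastI)
  have "M \<noteq> 0"
  proof
    assume "M = 0"
    then have "lt a id" using M by simp
    then show False using pa neI by (auto simp: lt_def pos_def) (meson less_asym)
  qed
  then obtain m where m: "M = Suc m" using not0_implies_Suc by blast
  have "\<not> lt a (h ^^ m)" using m M_def not_less_Least[of m "\<lambda>M. lt a (h ^^ M)"] by simp
  then have "le (h ^^ m) a" using not_lt_le K_pow[OF h] a by blast
  then show ?thesis using M m by blast
qed

lemma least_pos_pow:
  assumes e: "e \<in> K" and pe: "pos e" and least: "\<forall>g\<in>K. pos g \<longrightarrow> le e g"
    and g: "g \<in> K" and pg: "pos g"
  shows "\<exists>n. g = e ^^ n"
proof -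
  obtain m where m1: "le (e ^^ m) g" and m2: "lt g (e ^^ Suc m)" using floor_pow[OF e pe g pg] by blast
  have eU: "e \<in> U" using e K_sub by blast
  have emK: "e ^^ m \<in> K" using K_pow[OF e] .
  have emU: "e ^^ m \<in> U" using emK K_sub by blast
  have gU: "g \<in> U" using g K_sub by blast
  let ?d = "inv (e ^^ m) \<circ> g"
  have dK: "?d \<in> K" using K_comp K_inv emK g by blast
  have d1: "x \<le> ?d x" if x: "x \<in> I" for x
  proof -
    have "(e ^^ m) x \<le> g x" using m1 x by (auto simp: le_def)
    then have "inv (e ^^ m) ((e ^^ m) x) \<le> inv (e ^^ m) (g x)"
      using U_le_iff[OF U_inv[OF emU]] x U_in emU gU by blast
    then show ?thesis using U_inv_f[OF emU] by simp
  qed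
  have d2: "?d x < e x" if x: "x \<in> I" for x
  proof -
    have "(e ^^ Suc m) x = (e ^^ m) (e x)" by (simp only: funpow_Suc_right o_apply)
    then have "g x < (e ^^ m) (e x)" using m2 x by (auto simp: lt_def)
    then have "inv (e ^^ m) (g x) < inv (e ^^ m) ((e ^^ m) (e x))"
      using U_less_iff[OF U_inv[OF emU]] x U_in emU gU eU by blast
    then show ?thesis using U_inv_f[OF emU] by simp
  qed
  from trich[OF dK K_id] show ?thesis
  proof (elim disjE)
    assume "?d = id"
    then have "g = e ^^ m" by (auto simp: fun_eq_iff) (metis U_f_inv emU)
    then show ?thesis by blast
  next
    assume "lt ?d id"
    then show ?thesis using d1 neI by (auto simp: lt_def) (meson not_less)
  next
    assume "lt id ?d"
    then have "pos ?d" by (auto simp: lt_def pos_def)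
    then have "le e ?d" using least dK by blast
    then show ?thesis using d2 neI by (auto simp: le_def) (meson not_less)
  qed
qed

lemma halving:
  assumes c: "c \<in> K" and pc: "pos c" and nl: "\<not> (\<exists>e\<in>K. pos e \<and> (\<forall>g\<in>K. pos g \<longrightarrow> le e g))"
  shows "\<exists>h\<in>K. pos h \<and> le (h \<circ> h) c"
proof -
  obtain h1 where h1: "h1 \<in> K" "pos h1" "\<not> le c h1" using nl c pc by blast
  have "lt h1 c" using trich[OF h1(1) c] h1(3) by (auto simp: lt_def le_def less_imp_le)
  show ?thesis
  proof (cases "le (h1 \<circ> h1) c")
    case True then show ?thesis using h1 by blast
  next
    case False
    have hhK: "h1 \<circ> h1 \<in> K" using K_comp h1 by blast
    have lt2: "lt c (h1 \<circ> h1)" using trich[OF hhK c] False by (auto simp: lt_def le_def less_imp_le)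
    have h1U: "h1 \<in> U" and cU: "c \<in> U" using h1 c K_sub by auto
    let ?h0 = "inv h1 \<circ> c"
    have h0K: "?h0 \<in> K" using K_comp K_inv h1 c by blast
    have p0: "pos ?h0" unfolding pos_def
    proof
      fix x assume x: "x \<in> I"
      have "h1 x < c x" using \<open>lt h1 c\<close> x by (auto simp: lt_def)
      then have "inv h1 (h1 x) < inv h1 (c x)" using U_less_iff[OF U_inv[OF h1U]] x U_in h1U cU by blast
      then show "x < ?h0 x" using U_inv_f[OF h1U] by simp
    qed
    have l0: "?h0 x \<le> h1 x" if x: "x \<in> I" for x
    proof -
      have "c x < h1 (h1 x)" using lt2 x by (auto simp: lt_def)
      then have "inv h1 (c x) < inv h1 (h1 (h1 x))" using U_less_iff[OF U_inv[OF h1U]] x U_in h1U cU by blast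
      then show ?thesis using U_inv_f[OF h1U] by simp
    qed
    have "le (?h0 \<circ> ?h0) c" unfolding le_def
    proof
      fix x assume x: "x \<in> I"
      have h0x: "?h0 x \<in> I" using x U_in[OF cU] U_inv_in[OF h1U] by simp
      have "?h0 (?h0 x) \<le> h1 (?h0 x)" using l0[OF h0x] .
      also have "h1 (?h0 x) = c x" using U_f_inv[OF h1U] by simp
      finally show "(?h0 \<circ> ?h0) x \<le> c x" by simp
    qed
    then show ?thesis using h0K p0 by blast
  qed
qed


lemma holder_pos:
  assumes a: "a \<in> K" and pa: "pos a" and b: "b \<in> K" and pb: "pos b"
    and pc: "pos (a \<circ> b \<circ> inv a \<circ> inv b)"
  shows False
proof -
  have aU: "a \<in> U" and bU: "b \<in> U" using a b K_sub by auto
  let ?c = "a \<circ> b \<circ> inv a \<circ> inv b"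
  have cK: "?c \<in> K" using K_gen[OF aU bU] .
  show False
  proof (cases "\<exists>e\<in>K. pos e \<and> (\<forall>g\<in>K. pos g \<longrightarrow> le e g)")
    case True
    then obtain e where e: "e \<in> K" "pos e" "\<forall>g\<in>K. pos g \<longrightarrow> le e g" by blast
    obtain i where i: "a = e ^^ i" using least_pos_pow[OF e a pa] by blast
    obtain j where j: "b = e ^^ j" using least_pos_pow[OF e b pb] by blast
    have "a \<circ> b = b \<circ> a" unfolding i j by (simp add: funpow_add[symmetric] add.commute)
    then have "?c = id"
      by (auto simp: fun_eq_iff) (metis U_f_inv aU bU comp_apply)
    then show False using pos_ne_id[OF pc] by simp
  next
    case False
    obtain h where h: "h \<in> K" "pos h" "le (h \<circ> h) ?c" using halving[OF cK pc False] by blast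
    have hU: "h \<in> U" using h K_sub by blast
    obtain m where m1: "le (h ^^ m) a" and m2: "lt a (h ^^ Suc m)" using floor_pow[OF h(1,2) a pa] by blast
    obtain n where n1: "le (h ^^ n) b" and n2: "lt b (h ^^ Suc n)" using floor_pow[OF h(1,2) b pb] by blast
    have hmU: "h ^^ k \<in> U" for k using K_pow[OF h(1)] K_sub by blast
    obtain x where x: "x \<in> I" using neI by auto
    define w where "w = inv a (inv b x)"
    have wI: "w \<in> I" unfolding w_def using x U_inv_in aU bU by blast
    have bw: "b (a w) = x" unfolding w_def using U_f_inv[OF aU] U_f_inv[OF bU] by simp
    have cx: "?c x = a (b w)" unfolding w_def by simp
    have hnI: "(h ^^ k) y \<in> I" if "y \<in> I" for k y using U_in[OF hmU that] .
    have s0: "b w < (h ^^ Suc n) w" using n2 wI by (simp add: lt_def del: funpow.simps)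
    have s1: "a (b w) < a ((h ^^ Suc n) w)"
      using s0 U_less_iff[OF aU] U_in[OF bU wI] hnI[OF wI] by blast
    have s2: "a ((h ^^ Suc n) w) < (h ^^ Suc m) ((h ^^ Suc n) w)"
      using m2 hnI[OF wI] by (simp add: lt_def del: funpow.simps)
    have e1: "(h ^^ Suc m) ((h ^^ Suc n) w) = h (h ((h ^^ n) ((h ^^ m) w)))"
    proof -
      have "(h ^^ Suc m) ((h ^^ Suc n) w) = (h ^^ (Suc m + Suc n)) w" by (simp only: funpow_add o_apply)
      also have "Suc m + Suc n = Suc (Suc (n + m))" by simp
      also have "(h ^^ Suc (Suc (n + m))) w = h (h ((h ^^ n) ((h ^^ m) w)))" by (simp only: funpow.simps funpow_add o_apply)
      finally show ?thesis .
    qed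
    have t1: "(h ^^ m) w \<le> a w" using m1 wI by (auto simp: le_def)
    have t2: "(h ^^ n) ((h ^^ m) w) \<le> (h ^^ n) (a w)"
      using t1 U_le_iff[OF hmU] hnI[OF wI] U_in[OF aU wI] by blast
    have t3: "(h ^^ n) (a w) \<le> b (a w)" using n1 U_in[OF aU wI] by (auto simp: le_def)
    have t4: "(h ^^ n) ((h ^^ m) w) \<le> x" using t2 t3 bw by simp
    have t5: "h (h ((h ^^ n) ((h ^^ m) w))) \<le> h (h x)"
      using t4 U_le_iff[OF hU] U_in[OF hU] hnI[OF hnI[OF wI]] x by metis
    have t6: "h (h x) \<le> ?c x" using h(3) x by (auto simp: le_def)
    have "?c x < ?c x" using s1 s2 e1 t5 t6 cx by linarith
    then show False by simp
  qed
qed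

lemma comm_of_inv: "a \<in> U \<Longrightarrow> inv a \<circ> b = b \<circ> inv a \<Longrightarrow> a \<circ> b = b \<circ> a"
proof -
  assume aU: "a \<in> U" and e: "inv a \<circ> b = b \<circ> inv a"
  show "a \<circ> b = b \<circ> a"
  proof
    fix x
    have "inv a (b (a x)) = b (inv a (a x))" using e by (metis comp_apply)
    then have "inv a (b (a x)) = b x" using U_inv_f[OF aU] by simp
    then have "a (inv a (b (a x))) = a (b x)" by simp
    then show "(a \<circ> b) x = (b \<circ> a) x" using U_f_inv[OF aU] by simp
  qed
qed

lemma holder_pos2:
  assumes a: "a \<in> K" and pa: "pos a" and b: "b \<in> K" and pb: "pos b"
  shows "a \<circ> b = b \<circ> a"
proof -
  have aU: "a \<in> U" and bU: "b \<in> U" using a b K_sub by auto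
  let ?c = "a \<circ> b \<circ> inv a \<circ> inv b"
  have cK: "?c \<in> K" using K_gen[OF aU bU] .
  from trich[OF cK K_id] show ?thesis
  proof (elim disjE)
    assume "?c = id"
    show ?thesis
    proof
      fix y
      have "?c (b (a y)) = b (a y)" using \<open>?c = id\<close> by simp
      then show "(a \<circ> b) y = (b \<circ> a) y" using U_inv_f[OF aU] U_inv_f[OF bU] by simp
    qed
  next
    assume l: "lt ?c id"
    let ?c' = "b \<circ> a \<circ> inv b \<circ> inv a"
    have "pos ?c'" unfolding pos_def
    proof
      fix x assume x: "x \<in> I"
      have cc: "?c (?c' x) = x" using U_f_inv[OF aU] U_f_inv[OF bU] U_inv_f[OF aU] U_inv_f[OF bU] by simp
      have "?c' x \<in> I" using x U_in[OF aU] U_in[OF bU] U_inv_in[OF aU] U_inv_in[OF bU] by simp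
      then have "?c (?c' x) < ?c' x" using l by (auto simp: lt_def)
      then show "x < ?c' x" using cc by simp
    qed
    then show ?thesis using holder_pos[OF b pb a pa] by blast
  next
    assume "lt id ?c"
    then have "pos ?c" by (auto simp: lt_def pos_def)
    then show ?thesis using holder_pos[OF a pa b pb] by blast
  qed
qed

lemma pos_or_inv:
  assumes a: "a \<in> K" shows "a = id \<or> pos a \<or> pos (inv a)"
proof -
  have aU: "a \<in> U" using a K_sub by blast
  from trich[OF a K_id] show ?thesis
  proof (elim disjE)
    assume "lt a id"
    then have "pos (inv a)" unfolding pos_def
    proof (intro ballI)
      fix x assume l: "lt a id" and x: "x \<in> I"
      have "a (inv a x) < inv a x" using l U_inv_in[OF aU x] by (auto simp: lt_def)
      then show "x < inv a x" using U_f_inv[OF aU] by simp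
    qed
    then show ?thesis by blast
  qed (auto simp: lt_def pos_def)
qed

lemma holder:
  assumes a: "a \<in> K" and b: "b \<in> K"
  shows "a \<circ> b = b \<circ> a"
proof -
  have aU: "a \<in> U" and bU: "b \<in> U" using a b K_sub by auto
  have main: "a' \<circ> b = b \<circ> a'" if a': "a' \<in> K" "pos a'" for a'
  proof -
    from pos_or_inv[OF b] show ?thesis
    proof (elim disjE)
      assume "b = id" then show ?thesis by simp
    next
      assume "pos b" then show ?thesis using holder_pos2[OF a' b] by simp
    next
      assume "pos (inv b)"
      then have "a' \<circ> inv b = inv b \<circ> a'" using holder_pos2[OF a' K_inv[OF b]] by simp
      then show ?thesis using comm_of_inv[OF bU] by metis
    qed
  qed
  from pos_or_inv[OF a] show ?thesis
  proof (elim disjE)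
    assume "a = id" then show ?thesis by simp
  next
    assume "pos a" then show ?thesis using main[OF a] by simp
  next
    assume "pos (inv a)"
    then have "inv a \<circ> b = b \<circ> inv a" using main[OF K_inv[OF a]] by simp
    then show ?thesis using comm_of_inv[OF aU] by metis
  qed
qed


definition Sim :: "(real \<Rightarrow> 's) \<Rightarrow> real \<Rightarrow> (real \<Rightarrow> real) \<Rightarrow> bool" where
  "Sim F y g \<longleftrightarrow> (\<forall>z\<in>I. z < y \<longrightarrow> F (g z) = F z)"

lemma uniq_fix: "g \<in> U \<Longrightarrow> g \<noteq> id \<Longrightarrow> x \<in> I \<Longrightarrow> z \<in> I \<Longrightarrow> g x = x \<Longrightarrow> g z = z \<Longrightarrow> x = z"
  using uniq by blast

lemma commute_contra:
  assumes y: "y \<in> I" and a: "a \<in> U" and b: "b \<in> U" and ab: "a \<circ> b = b \<circ> a"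
    and sa: "Sim F y a" and sb: "Sim F y b" and ay: "a y < y" and by': "b y < y"
  shows "F (a y) = F (b y)"
proof -
  have "F (a (b y)) = F (b y)" using sa by' U_in[OF b y] by (auto simp: Sim_def)
  moreover have "F (b (a y)) = F (a y)" using sb ay U_in[OF a y] by (auto simp: Sim_def)
  moreover have "a (b y) = b (a y)" using ab by (metis comp_apply)
  ultimately show ?thesis by simp
qed

lemma conj_sim:
  assumes y: "y \<in> I" and u: "u \<in> U" and uy: "u y < y" and su: "Sim F y u"
    and g: "g \<in> U" and gl: "\<forall>x\<in>I. g x < x" and sg: "Sim F y g"
  shows "Sim F y (inv u \<circ> g \<circ> u) \<and> F ((inv u \<circ> g \<circ> u) y) = F (u y)"
proof -
  have cl: "(inv u \<circ> g \<circ> u) z < z" if z: "z \<in> I" for z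
  proof -
    have "g (u z) < u z" using gl U_in[OF u z] by blast
    then have "inv u (g (u z)) < inv u (u z)"
      using U_less_iff[OF U_inv[OF u]] U_in[OF g] U_in[OF u z] by blast
    then show ?thesis using U_inv_f[OF u] by simp
  qed
  have cI: "(inv u \<circ> g \<circ> u) z \<in> I" if z: "z \<in> I" for z
    using U_inv_in[OF u] U_in[OF g] U_in[OF u z] by simp
  have key: "F ((inv u \<circ> g \<circ> u) z) = F (u z)" if z: "z \<in> I" "z \<le> y" for z
  proof -
    have uz: "u z < y" using U_le_iff[OF u z(1) y] z uy by (meson le_less_trans U_le_iff[OF u] )
    have "(inv u \<circ> g \<circ> u) z < y" using cl[OF z(1)] z(2) by simp
    then have "F (u ((inv u \<circ> g \<circ> u) z)) = F ((inv u \<circ> g \<circ> u) z)" using su cI[OF z(1)] by (auto simp: Sim_def)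
    moreover have "u ((inv u \<circ> g \<circ> u) z) = g (u z)" using U_f_inv[OF u] by simp
    moreover have "F (g (u z)) = F (u z)" using sg uz U_in[OF u z(1)] by (auto simp: Sim_def)
    ultimately show ?thesis by simp
  qed
  have "Sim F y (inv u \<circ> g \<circ> u)" unfolding Sim_def
  proof (intro ballI impI)
    fix z assume z: "z \<in> I" "z < y"
    have "F (u z) = F z" using su z by (auto simp: Sim_def)
    then show "F ((inv u \<circ> g \<circ> u) z) = F z" using key[OF z(1)] z by simp
  qed
  then show ?thesis using key[OF y] by simp
qed

lemma no_good_after_bad:
  assumes y: "y \<in> I" and c: "\<gamma> \<in> U" and cy: "\<gamma> y < y" and sc: "Sim F y \<gamma>" and bad: "F (\<gamma> y) \<noteq> F y"
    and p: "\<psi> \<in> U" and py: "\<psi> y < y" and sp: "\<forall>z\<in>I. z \<le> y \<longrightarrow> F (\<psi> z) = F z"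
  shows False
proof -
  have spy: "Sim F y \<psi>" using sp by (auto simp: Sim_def)
  have cI: "\<gamma> z \<in> I" if "z \<in> I" for z using U_in[OF c that] .
  have pI: "\<psi> z \<in> I" if "z \<in> I" for z using U_in[OF p that] .
  have cyI: "\<gamma> y \<in> I" and pyI: "\<psi> y \<in> I" using cI pI y by auto
  have cnid: "\<gamma> \<noteq> id" using cy by auto
  have pnid: "\<psi> \<noteq> id" using py by auto
  let ?k = "inv \<gamma> \<circ> inv \<psi> \<circ> \<gamma> \<circ> \<psi>"
  have kK: "?k \<in> K"
  proof -
    have "inv \<gamma> \<circ> inv \<psi> \<circ> inv (inv \<gamma>) \<circ> inv (inv \<psi>) \<in> K" using K_gen[OF U_inv[OF c] U_inv[OF p]] .
    moreover have "inv (inv \<gamma>) = \<gamma>" "inv (inv \<psi>) = \<psi>" using inv_inv_eq U_bij c p by auto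
    ultimately show ?thesis by simp
  qed
  have kU: "?k \<in> U" using kK K_sub by blast
  have kI: "?k z \<in> I" if "z \<in> I" for z using U_in[OF kU that] .
  have kid: "\<psi> (\<gamma> (?k z)) = \<gamma> (\<psi> z)" for z using U_f_inv[OF c] U_f_inv[OF p] by simp
  show False
  proof (cases "?k = id")
    case True
    then have "\<psi> (\<gamma> y) = \<gamma> (\<psi> y)" using kid[of y] by simp
    moreover have "F (\<psi> (\<gamma> y)) = F (\<gamma> y)" using sp cyI cy by auto
    moreover have "F (\<gamma> (\<psi> y)) = F y" using sc py pyI sp y by (auto simp: Sim_def)
    ultimately show False using bad by simp
  next
    case False
    have nf: "\<forall>x\<in>I. ?k x \<noteq> x" using K_free[OF kK False] by blast
    from sign_free[OF kU nf] show False
    proof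
      assume kl: "\<forall>x\<in>I. ?k x < x"
      have sA: "\<gamma> (\<psi> z) < \<psi> (\<gamma> z)" if z: "z \<in> I" for z
      proof -
        have "\<psi> (\<gamma> (?k z)) < \<psi> (\<gamma> z)"
          using kl z kI[OF z] cI pI U_less_iff[OF c] U_less_iff[OF p] by meson
        then show ?thesis using kid by simp
      qed
      have claim1: "\<gamma> (\<psi> y) \<le> \<psi> y"
      proof (rule ccontr)
        assume "\<not> ?thesis"
        then have g1: "\<psi> y < \<gamma> (\<psi> y)" by simp
        obtain q where q: "\<psi> y \<le> q" "q \<le> y" "\<gamma> q = q"
          using fixpt_between[OF c pyI y] g1 cy py by force
        have qI: "q \<in> I" using interval_sub[OF pyI y] q by auto
        have qne: "\<psi> y < q" using q g1 by (metis order.order_iff_strict less_irrefl)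
        have a1: "\<gamma> (\<psi> q) < \<psi> q" using sA[OF qI] q by simp
        show False
        proof (cases "\<psi> q \<le> q")
          case True
          have wne: "\<psi> q < q" using True a1 q by (metis order.order_iff_strict less_irrefl)
          have wI: "\<psi> q \<in> I" using pI qI by blast
          obtain r where r: "min (\<psi> q) (\<psi> y) \<le> r" "r \<le> max (\<psi> q) (\<psi> y)" "\<gamma> r = r"
          proof (cases "\<psi> q \<le> \<psi> y")
            case True
            from fixpt_between[OF c wI pyI True] a1 g1 obtain r where "\<psi> q \<le> r" "r \<le> \<psi> y" "\<gamma> r = r" by force
            then show ?thesis using that True by auto
          next
            case False
            then have le: "\<psi> y \<le> \<psi> q" by simp
            from fixpt_between[OF c pyI wI le] a1 g1 obtain r where "\<psi> y \<le> r" "r \<le> \<psi> q" "\<gamma> r = r" by force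
            then show ?thesis using that False by auto
          qed
          have rI: "r \<in> I" using r interval_sub[OF wI pyI] interval_sub[OF pyI wI]
            by (cases "\<psi> q \<le> \<psi> y") auto
          have "r < q" using r wne qne by auto
          then show False using uniq_fix[OF c cnid rI qI r(3) q(3)] by simp
        next
          case False
          then have "q \<le> \<psi> q" by simp
          from fixpt_between[OF p qI y q(2)] this py obtain r where r: "q \<le> r" "r \<le> y" "\<psi> r = r" by force
          have rI: "r \<in> I" using r interval_sub[OF qI y] by auto
          have "\<psi> r \<le> \<psi> y" using U_le_iff[OF p rI y] r by simp
          then show False using r qne by simp
        qed
      qed
      have simk: "Sim F y ?k" unfolding Sim_def
      proof (intro ballI impI)
        fix z assume z: "z \<in> I" "z < y"
        have z1: "\<psi> z < \<psi> y" using U_less_iff[OF p z(1) y] z by simp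
        have z1I: "\<psi> z \<in> I" using pI z by blast
        have f1: "F (\<psi> z) = F z" using sp z by auto
        have f2: "F (\<gamma> (\<psi> z)) = F (\<psi> z)" using sc z1 py z1I by (auto simp: Sim_def)
        have z2: "\<gamma> (\<psi> z) < \<psi> y" using U_less_iff[OF c z1I pyI] z1 claim1 by simp
        have z2I: "\<gamma> (\<psi> z) \<in> I" using cI z1I by blast
        let ?z3 = "inv \<psi> (\<gamma> (\<psi> z))"
        have z3: "?z3 < y" using U_less_iff[OF U_inv[OF p] z2I pyI] z2 U_inv_f[OF p] by simp
        have z3I: "?z3 \<in> I" using U_inv_in[OF p z2I] .
        have f3: "F ?z3 = F (\<gamma> (\<psi> z))" using sp z3 z3I U_f_inv[OF p] by (metis order.strict_implies_order)
        have z4: "?k z < y" using kl z by (meson less_trans)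
        have f4: "F (\<gamma> (?k z)) = F (?k z)" using sc z4 kI[OF z(1)] by (auto simp: Sim_def)
        have "\<gamma> (?k z) = ?z3" using U_f_inv[OF c] by simp
        then show "F (?k z) = F z" using f1 f2 f3 f4 by simp
      qed
      have Fk: "F (?k y) = F y"
      proof -
        have kyy: "?k y < y" using kl y by blast
        have "F (\<gamma> (?k y)) = F (?k y)" using sc kyy kI[OF y] by (auto simp: Sim_def)
        moreover have "\<gamma> (?k y) < \<gamma> y" using U_less_iff[OF c kI[OF y] y] kyy by simp
        then have "F (\<psi> (\<gamma> (?k y))) = F (\<gamma> (?k y))" using sp cI kI[OF y] cy by auto
        moreover have "F (\<gamma> (\<psi> y)) = F y" using sc py pyI sp y by (auto simp: Sim_def)
        ultimately show ?thesis using kid[of y] by simp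
      qed
      have cs: "Sim F y (inv \<gamma> \<circ> ?k \<circ> \<gamma>) \<and> F ((inv \<gamma> \<circ> ?k \<circ> \<gamma>) y) = F (\<gamma> y)"
        using conj_sim[OF y c cy sc kU kl simk] .
      let ?k' = "inv \<gamma> \<circ> ?k \<circ> \<gamma>"
      have k'K: "?k' \<in> K" using K_conj[OF kK c] .
      have k'U: "?k' \<in> U" using k'K K_sub by blast
      have k'y: "?k' y < y"
      proof -
        have "?k (\<gamma> y) < \<gamma> y" using kl cyI by blast
        then have "inv \<gamma> (?k (\<gamma> y)) < inv \<gamma> (\<gamma> y)"
          using U_less_iff[OF U_inv[OF c]] kI cyI by blast
        then show ?thesis using U_inv_f[OF c] by simp
      qed
      have "F (?k y) = F (?k' y)"
        using commute_contra[OF y kU k'U holder[OF kK k'K] simk conjunct1[OF cs]] kl y k'y by blast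
      then show False using Fk cs bad by simp
    next
      assume kg: "\<forall>x\<in>I. x < ?k x"
      let ?l = "inv ?k"
      have lK: "?l \<in> K" using K_inv[OF kK] .
      have lU: "?l \<in> U" using lK K_sub by blast
      have lI: "?l z \<in> I" if "z \<in> I" for z using U_in[OF lU that] .
      have kl_id: "?k (?l z) = z" for z using U_f_inv[OF kU] .
      have ll: "\<forall>x\<in>I. ?l x < x"
      proof
        fix x assume x: "x \<in> I"
        have "?l x < ?k (?l x)" using kg lI[OF x] by blast
        then show "?l x < x" using kl_id by simp
      qed
      have lid: "\<psi> (\<gamma> z) = \<gamma> (\<psi> (?l z))" for z using kid[of "?l z"] kl_id[of z] by simp
      have sB: "\<psi> (\<gamma> z) < \<gamma> (\<psi> z)" if z: "z \<in> I" for z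
      proof -
        have "\<gamma> (\<psi> (?l z)) < \<gamma> (\<psi> z)"
          using ll z lI[OF z] cI pI U_less_iff[OF c] U_less_iff[OF p] by meson
        then show ?thesis using lid by simp
      qed
      have claim2: "\<psi> (\<gamma> y) \<le> \<gamma> y"
      proof (rule ccontr)
        assume "\<not> ?thesis"
        then have g1: "\<gamma> y < \<psi> (\<gamma> y)" by simp
        obtain q where q: "\<gamma> y \<le> q" "q \<le> y" "\<psi> q = q"
          using fixpt_between[OF p cyI y] g1 cy py by force
        have qI: "q \<in> I" using interval_sub[OF cyI y] q by auto
        have qne: "\<gamma> y < q" using q g1 by (metis order.order_iff_strict less_irrefl)
        have a1: "\<psi> (\<gamma> q) < \<gamma> q" using sB[OF qI] q by simp
        show False
        proof (cases "\<gamma> q \<le> q")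
          case True
          have wne: "\<gamma> q < q" using True a1 q by (metis order.order_iff_strict less_irrefl)
          have wI: "\<gamma> q \<in> I" using cI qI by blast
          obtain r where r: "min (\<gamma> q) (\<gamma> y) \<le> r" "r \<le> max (\<gamma> q) (\<gamma> y)" "\<psi> r = r"
          proof (cases "\<gamma> q \<le> \<gamma> y")
            case True
            from fixpt_between[OF p wI cyI True] a1 g1 obtain r where "\<gamma> q \<le> r" "r \<le> \<gamma> y" "\<psi> r = r" by force
            then show ?thesis using that True by auto
          next
            case False
            then have le: "\<gamma> y \<le> \<gamma> q" by simp
            from fixpt_between[OF p cyI wI le] a1 g1 obtain r where "\<gamma> y \<le> r" "r \<le> \<gamma> q" "\<psi> r = r" by force
            then show ?thesis using that False by auto
          qed
          have rI: "r \<in> I" using r interval_sub[OF wI cyI] interval_sub[OF cyI wI]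
            by (cases "\<gamma> q \<le> \<gamma> y") auto
          have "r < q" using r wne qne by auto
          then show False using uniq_fix[OF p pnid rI qI r(3) q(3)] by simp
        next
          case False
          then have "q \<le> \<gamma> q" by simp
          from fixpt_between[OF c qI y q(2)] this cy obtain r where r: "q \<le> r" "r \<le> y" "\<gamma> r = r" by force
          have rI: "r \<in> I" using r interval_sub[OF qI y] by auto
          have "\<gamma> r \<le> \<gamma> y" using U_le_iff[OF c rI y] r by simp
          then show False using r qne by simp
        qed
      qed
      have siml: "Sim F y ?l" unfolding Sim_def
      proof (intro ballI impI)
        fix z assume z: "z \<in> I" "z < y"
        have z1: "\<gamma> z < \<gamma> y" using U_less_iff[OF c z(1) y] z by simp
        have z1I: "\<gamma> z \<in> I" using cI z by blast
        have f1: "F (\<gamma> z) = F z" using sc z by (auto simp: Sim_def)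
        have f2: "F (\<psi> (\<gamma> z)) = F (\<gamma> z)" using sp z1 cy z1I by auto
        have z2: "\<psi> (\<gamma> z) < \<gamma> y" using U_less_iff[OF p z1I cyI] z1 claim2 by simp
        have z2I: "\<psi> (\<gamma> z) \<in> I" using pI z1I by blast
        let ?z3 = "inv \<gamma> (\<psi> (\<gamma> z))"
        have z3: "?z3 < y" using U_less_iff[OF U_inv[OF c] z2I cyI] z2 U_inv_f[OF c] by simp
        have z3I: "?z3 \<in> I" using U_inv_in[OF c z2I] .
        have f3: "F ?z3 = F (\<psi> (\<gamma> z))" using sc z3 z3I U_f_inv[OF c] by (auto simp: Sim_def)
        have lz: "?l z < y" using ll z by (meson less_trans)
        have e4: "\<psi> (?l z) = ?z3" using lid[of z] U_inv_f[OF c] by simp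
        have f4: "F (\<psi> (?l z)) = F (?l z)" using sp lz lI[OF z(1)] by auto
        show "F (?l z) = F z" using f1 f2 f3 f4 e4 by simp
      qed
      have Fl: "F (?l y) = F (\<gamma> y)"
      proof -
        have lyy: "?l y < y" using ll y by blast
        have "\<psi> (?l y) < \<psi> y" using U_less_iff[OF p lI[OF y] y] lyy by simp
        then have "F (\<gamma> (\<psi> (?l y))) = F (\<psi> (?l y))" using sc py pI lI[OF y] by (auto simp: Sim_def)
        moreover have "F (\<psi> (?l y)) = F (?l y)" using sp lyy lI[OF y] by auto
        moreover have "F (\<psi> (\<gamma> y)) = F (\<gamma> y)" using sp cyI cy by auto
        ultimately show ?thesis using lid[of y] by simp
      qed
      have cs: "Sim F y (inv \<psi> \<circ> ?l \<circ> \<psi>) \<and> F ((inv \<psi> \<circ> ?l \<circ> \<psi>) y) = F (\<psi> y)"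
        using conj_sim[OF y p py spy lU ll siml] .
      let ?l' = "inv \<psi> \<circ> ?l \<circ> \<psi>"
      have l'K: "?l' \<in> K" using K_conj[OF lK p] .
      have l'U: "?l' \<in> U" using l'K K_sub by blast
      have l'y: "?l' y < y"
      proof -
        have "?l (\<psi> y) < \<psi> y" using ll pyI by blast
        then have "inv \<psi> (?l (\<psi> y)) < inv \<psi> (\<psi> y)"
          using U_less_iff[OF U_inv[OF p]] lI pyI by blast
        then show ?thesis using U_inv_f[OF p] by simp
      qed
      have "F (?l y) = F (?l' y)"
        using commute_contra[OF y lU l'U holder[OF lK l'K] siml conjunct1[OF cs]] ll y l'y by blast
      moreover have "F (\<psi> y) = F y" using sp y by auto
      ultimately show False using Fl cs bad by simp
    qed
  qed
qed


end

lemma countable_left_gap: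
  fixes X :: "real set"
  assumes g: "\<forall>x\<in>X. \<exists>p<x. \<forall>x'\<in>X. x' < x \<longrightarrow> x' \<le> p"
  shows "countable X"
proof -
  obtain p where p: "\<forall>x\<in>X. p x < x \<and> (\<forall>x'\<in>X. x' < x \<longrightarrow> x' \<le> p x)" using g by metis
  have "\<forall>x\<in>X. \<exists>q\<in>\<rat>. p x < q \<and> q < x" using p Rats_dense_in_real by blast
  then obtain q where q: "\<forall>x\<in>X. q x \<in> \<rat> \<and> p x < q x \<and> q x < x" by metis
  have inj: "inj_on q X"
  proof (rule inj_onI)
    fix x y assume xy: "x \<in> X" "y \<in> X" "q x = q y"
    show "x = y"
    proof (rule ccontr)
      assume "x \<noteq> y"
      then consider "x < y" | "y < x" by linarith
      then show False
      proof cases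
        case 1 then have "x \<le> p y" using p xy by blast
        moreover have "q x < x" "p y < q y" using q xy by auto
        ultimately show False using xy(3) by linarith
      next
        case 2 then have "y \<le> p x" using p xy by blast
        moreover have "q y < y" "p x < q x" using q xy by auto
        ultimately show False using xy(3) by linarith
      qed
    qed
  qed
  have "q ` X \<subseteq> \<rat>" using q by auto
  then have "countable (q ` X)" using countable_rat countable_subset by blast
  then show ?thesis using countable_image_inj_on inj by blast
qed

lemma countable_right_gap:
  fixes X :: "real set"
  assumes g: "\<forall>x\<in>X. \<exists>u>x. \<forall>x'\<in>X. x < x' \<longrightarrow> u \<le> x'"
  shows "countable X"
proof -
  have "\<forall>x\<in>uminus ` X. \<exists>p<x. \<forall>x'\<in>uminus ` X. x' < x \<longrightarrow> x' \<le> p"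
  proof
    fix x assume "x \<in> uminus ` X"
    then obtain y where y: "y \<in> X" "x = - y" by auto
    obtain u where u: "u > y" "\<forall>x'\<in>X. y < x' \<longrightarrow> u \<le> x'" using g y by blast
    show "\<exists>p<x. \<forall>x'\<in>uminus ` X. x' < x \<longrightarrow> x' \<le> p"
      using u y by (intro exI[of _ "- u"]) auto
  qed
  then have "countable (uminus ` X)" by (rule countable_left_gap)
  then have "countable (uminus ` (uminus ` X))" by (rule countable_image)
  moreover have "uminus ` (uminus ` X) = X" by (auto simp: image_iff)
  ultimately show ?thesis by simp
qed

lemma restr_val: "restr_to I F t z = (if z \<in> I \<and> z < t then Some (F z) else None)"
  unfolding restr_to_def restrict_map_def by simp

lemma restr_dom: "dom (restr_to I F t) = {x\<in>I. x < t}"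
  unfolding dom_def restr_val by simp

lemma Ext_restr_g: "(\<forall>z\<in>I. z < t \<longrightarrow> restr_to I F t z = Some (G (\<phi> z))) \<longleftrightarrow> (\<forall>z\<in>(I::real set). z < t \<longrightarrow> F z = G (\<phi> z))"
  by (auto simp: restr_val)

lemma restr_D: "t \<in> I \<Longrightarrow> \<forall>x\<in>I. F x \<in> S \<Longrightarrow> restr_to (I::real set) F t \<in> pred_domain I S"
  unfolding pred_domain_def
proof (intro CollectI conjI)
  assume a: "t \<in> I" "\<forall>x\<in>I. F x \<in> S"
  have "dom (restr_to I F t) = {x\<in>I. x < t}" by (rule restr_dom)
  then show "\<exists>t'\<in>I. dom (restr_to I F t) = {x\<in>I. x < t'}" using a by blast
  show "ran (restr_to I F t) \<subseteq> S"
  proof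
    fix v assume "v \<in> ran (restr_to I F t)"
    then obtain z where "restr_to I F t z = Some v" by (auto simp: ran_def)
    then have "z \<in> I" "v = F z" by (auto simp: restr_val split: if_splits)
    then show "v \<in> S" using a by simp
  qed
qed

context setting begin

definition Bset :: "(real \<Rightarrow> 's) \<Rightarrow> real set" where
  "Bset F = {y\<in>I. \<exists>g\<in>U. g y < y \<and> Sim F y g \<and> F (g y) \<noteq> F y}"

lemma Bset_gap:
  assumes yB: "y \<in> Bset F"
  shows "\<exists>p<y. \<forall>y'\<in>Bset F. y' < y \<longrightarrow> y' \<le> p"
proof -
  obtain g where y: "y \<in> I" and g: "g \<in> U" "g y < y" "Sim F y g" "F (g y) \<noteq> F y"
    using yB by (auto simp: Bset_def)
  have gnid: "g \<noteq> id" using g by auto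
  have fp: "\<exists>r. y' \<le> r \<and> r < y \<and> r \<in> I \<and> g r = r" if y': "y' \<in> Bset F" "y' < y" for y'
  proof -
    obtain h where y'I: "y' \<in> I" and h: "h \<in> U" "h y' < y'" "Sim F y' h" "F (h y') \<noteq> F y'"
      using y' by (auto simp: Bset_def)
    have "\<not> g y' < y'"
    proof
      assume gy': "g y' < y'"
      have "\<forall>z\<in>I. z \<le> y' \<longrightarrow> F (g z) = F z" using g(3) y'(2) by (auto simp: Sim_def)
      then show False using no_good_after_bad[OF y'I h g(1) gy'] by blast
    qed
    then have "y' \<le> g y'" by simp
    from fixpt_between[OF g(1) y'I y less_imp_le[OF y'(2)]] this g(2)
    obtain r where r: "y' \<le> r" "r \<le> y" "g r = r" by force
    have "r \<noteq> y" using r g(2) by auto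
    moreover have "r \<in> I" using r interval_sub[OF y'I y] by auto
    ultimately show ?thesis using r by auto
  qed
  show ?thesis
  proof (cases "\<exists>w\<in>I. w < y \<and> g w = w")
    case True
    then obtain w where w: "w \<in> I" "w < y" "g w = w" by blast
    have "\<forall>y'\<in>Bset F. y' < y \<longrightarrow> y' \<le> w"
    proof (intro ballI impI)
      fix y' assume "y' \<in> Bset F" "y' < y"
      then obtain r where "y' \<le> r" "r < y" "r \<in> I" "g r = r" using fp by blast
      then show "y' \<le> w" using uniq_fix[OF g(1) gnid _ w(1)] w by metis
    qed
    then show ?thesis using w by blast
  next
    case False
    have "\<forall>y'\<in>Bset F. y' < y \<longrightarrow> y' \<le> y - 1"
      using fp False by blast
    then show ?thesis by (intro exI[of _ "y - 1"]) auto
  qed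
qed

lemma Bset_countable: "countable (Bset F)"
  using Bset_gap by (intro countable_left_gap) blast


definition Tf :: "(real \<rightharpoonup> 's) \<Rightarrow> real" where
  "Tf f = (THE t. t \<in> I \<and> dom f = {x\<in>I. x < t})"

definition SS :: "(real \<rightharpoonup> 's) \<Rightarrow> real \<Rightarrow> (real \<Rightarrow> real) \<Rightarrow> bool" where
  "SS f t g \<longleftrightarrow> g t < t \<and> (\<forall>z\<in>I. z < t \<longrightarrow> f (g z) = f z)"

definition caseA :: "(real \<rightharpoonup> 's) \<Rightarrow> bool" where
  "caseA f \<longleftrightarrow> (\<exists>g\<in>U. SS f (Tf f) g)"

definition Vs :: "(real \<rightharpoonup> 's) \<Rightarrow> 's set" where
  "Vs f = {v. \<exists>g\<in>U. SS f (Tf f) g \<and> f (g (Tf f)) = Some v}"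

definition Ext :: "(real \<rightharpoonup> 's) \<Rightarrow> real \<Rightarrow> (real \<Rightarrow> 's) \<Rightarrow> (real \<Rightarrow> real) \<Rightarrow> bool" where
  "Ext f t G \<phi> \<longleftrightarrow> (\<forall>z\<in>I. z < t \<longrightarrow> f z = Some (G (\<phi> z)))"

definition Es :: "'s set \<Rightarrow> (real \<rightharpoonup> 's) \<Rightarrow> (real \<Rightarrow> 's) set" where
  "Es S f = {G. (\<forall>x. G x \<in> S) \<and> (\<exists>\<phi>\<in>U. Ext f (Tf f) G \<phi>)}"

definition Gf :: "'s set \<Rightarrow> (real \<Rightarrow> 's) rel \<Rightarrow> (real \<rightharpoonup> 's) \<Rightarrow> (real \<Rightarrow> 's)" where
  "Gf S r f = wo_rel.minim r (Es S f)"

definition Xs :: "'s set \<Rightarrow> (real \<Rightarrow> 's) rel \<Rightarrow> (real \<rightharpoonup> 's) \<Rightarrow> real set" where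
  "Xs S r f = {\<phi> (Tf f) | \<phi>. \<phi> \<in> U \<and> Ext f (Tf f) (Gf S r f) \<phi>}"

definition Pr :: "'s set \<Rightarrow> (real \<Rightarrow> 's) rel \<Rightarrow> (real \<rightharpoonup> 's) \<Rightarrow> 's" where
  "Pr S r f = (if caseA f then (SOME v. v \<in> Vs f) else Gf S r f (SOME x. x \<in> Xs S r f))"

lemma Tf_eq: "t \<in> I \<Longrightarrow> dom f = {x\<in>I. x < t} \<Longrightarrow> Tf f = t"
  unfolding Tf_def
proof (rule the_equality)
  fix t' assume a: "t \<in> I" "dom f = {x\<in>I. x < t}" and b: "t' \<in> I \<and> dom f = {x\<in>I. x < t'}"
  show "t' = t"
  proof (rule ccontr)
    assume "t' \<noteq> t"
    then consider "t' < t" | "t < t'" by linarith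
    then show False
    proof cases
      case 1 then have "t' \<in> {x\<in>I. x < t}" using b by auto
      then show False using a b by auto
    next
      case 2 then have "t \<in> {x\<in>I. x < t'}" using a by auto
      then show False using a b by auto
    qed
  qed
qed auto

lemma transport:
  assumes p: "\<phi> \<in> U" and t: "t \<in> I"
  shows "(\<forall>z\<in>I. z < inv \<phi> t \<longrightarrow> Q (\<phi> z)) \<longleftrightarrow> (\<forall>w\<in>I. w < t \<longrightarrow> Q w)"
proof
  assume h: "\<forall>z\<in>I. z < inv \<phi> t \<longrightarrow> Q (\<phi> z)"
  show "\<forall>w\<in>I. w < t \<longrightarrow> Q w"
  proof (intro ballI impI)
    fix w assume w: "w \<in> I" "w < t"
    have "inv \<phi> w < inv \<phi> t" using U_less_iff[OF U_inv[OF p] w(1) t] w by simp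
    then have "Q (\<phi> (inv \<phi> w))" using h U_inv_in[OF p w(1)] by blast
    then show "Q w" using U_f_inv[OF p] by simp
  qed
next
  assume h: "\<forall>w\<in>I. w < t \<longrightarrow> Q w"
  show "\<forall>z\<in>I. z < inv \<phi> t \<longrightarrow> Q (\<phi> z)"
  proof (intro ballI impI)
    fix z assume z: "z \<in> I" "z < inv \<phi> t"
    have "\<phi> z < \<phi> (inv \<phi> t)" using U_less_iff[OF p z(1) U_inv_in[OF p t]] z by simp
    then show "Q (\<phi> z)" using h U_in[OF p z(1)] U_f_inv[OF p] by simp
  qed
qed

lemma dom_comp:
  assumes p: "\<phi> \<in> U" and t: "t \<in> I" and d: "dom f = {x\<in>I. x < t}"
  shows "dom (f \<circ> \<phi>) = {x\<in>I. x < inv \<phi> t}"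
proof (rule set_eqI)
  fix x
  show "x \<in> dom (f \<circ> \<phi>) \<longleftrightarrow> x \<in> {x\<in>I. x < inv \<phi> t}"
  proof (cases "x \<in> I")
    case True
    have "\<phi> x < t \<longleftrightarrow> x < inv \<phi> t"
      using U_less_iff[OF p True U_inv_in[OF p t]] U_f_inv[OF p] by simp
    then show ?thesis using d True U_in[OF p True] by (auto simp: dom_def)
  next
    case False
    then show ?thesis using d U_out[OF p False] by (auto simp: dom_def)
  qed
qed

lemma SS_conj:
  assumes p: "\<phi> \<in> U" and g: "g \<in> U" and t: "t \<in> I"
  shows "SS (f \<circ> \<phi>) (inv \<phi> t) g \<longleftrightarrow> SS f t (\<phi> \<circ> g \<circ> inv \<phi>)"
proof -
  have t': "inv \<phi> t \<in> I" using U_inv_in[OF p t] .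
  have a: "g (inv \<phi> t) < inv \<phi> t \<longleftrightarrow> (\<phi> \<circ> g \<circ> inv \<phi>) t < t"
    using U_less_iff[OF p U_in[OF g t'] t'] U_f_inv[OF p] by simp
  have b: "(\<forall>z\<in>I. z < inv \<phi> t \<longrightarrow> (f \<circ> \<phi>) (g z) = (f \<circ> \<phi>) z) \<longleftrightarrow>
           (\<forall>w\<in>I. w < t \<longrightarrow> f ((\<phi> \<circ> g \<circ> inv \<phi>) w) = f w)"
    using transport[OF p t, of "\<lambda>w. f ((\<phi> \<circ> g \<circ> inv \<phi>) w) = f w"] U_inv_f[OF p] by simp
  show ?thesis unfolding SS_def using a b by simp
qed

lemma conj_U: "\<phi> \<in> U \<Longrightarrow> g \<in> U \<Longrightarrow> \<phi> \<circ> g \<circ> inv \<phi> \<in> U"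
  by (intro U_comp U_inv)
lemma conj_U': "\<phi> \<in> U \<Longrightarrow> g \<in> U \<Longrightarrow> inv \<phi> \<circ> g \<circ> \<phi> \<in> U"
  by (intro U_comp U_inv)
lemma conj_back: "\<phi> \<in> U \<Longrightarrow> \<phi> \<circ> (inv \<phi> \<circ> g \<circ> \<phi>) \<circ> inv \<phi> = g"
  by (auto simp: fun_eq_iff U_f_inv)

lemma caseA_comp:
  assumes p: "\<phi> \<in> U" and t: "t \<in> I" and d: "dom f = {x\<in>I. x < t}"
  shows "caseA (f \<circ> \<phi>) \<longleftrightarrow> caseA f"
proof -
  have T1: "Tf f = t" using Tf_eq[OF t d] .
  have T2: "Tf (f \<circ> \<phi>) = inv \<phi> t" using Tf_eq[OF U_inv_in[OF p t] dom_comp[OF p t d]] .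
  show ?thesis unfolding caseA_def T1 T2
  proof
    assume "\<exists>g\<in>U. SS (f \<circ> \<phi>) (inv \<phi> t) g"
    then obtain g where "g \<in> U" "SS (f \<circ> \<phi>) (inv \<phi> t) g" by blast
    then show "\<exists>g\<in>U. SS f t g" using SS_conj[OF p _ t] conj_U[OF p] by blast
  next
    assume "\<exists>g\<in>U. SS f t g"
    then obtain g where g: "g \<in> U" "SS f t g" by blast
    have "SS (f \<circ> \<phi>) (inv \<phi> t) (inv \<phi> \<circ> g \<circ> \<phi>) \<longleftrightarrow> SS f t (\<phi> \<circ> (inv \<phi> \<circ> g \<circ> \<phi>) \<circ> inv \<phi>)"
      by (rule SS_conj[OF p conj_U'[OF p g(1)] t])
    then have "SS (f \<circ> \<phi>) (inv \<phi> t) (inv \<phi> \<circ> g \<circ> \<phi>)"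
      using g(2) by (simp only: conj_back[OF p])
    then show "\<exists>g\<in>U. SS (f \<circ> \<phi>) (inv \<phi> t) g" using conj_U'[OF p g(1)] by blast
  qed
qed

lemma Vs_comp:
  assumes p: "\<phi> \<in> U" and t: "t \<in> I" and d: "dom f = {x\<in>I. x < t}"
  shows "Vs (f \<circ> \<phi>) = Vs f"
proof -
  have T1: "Tf f = t" using Tf_eq[OF t d] .
  have T2: "Tf (f \<circ> \<phi>) = inv \<phi> t" using Tf_eq[OF U_inv_in[OF p t] dom_comp[OF p t d]] .
  have val: "(f \<circ> \<phi>) (g (inv \<phi> t)) = f ((\<phi> \<circ> g \<circ> inv \<phi>) t)" for g by simp
  show ?thesis unfolding Vs_def T1 T2
  proof (intro set_eqI iffI; simp only: mem_Collect_eq)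
    fix v assume "\<exists>g\<in>U. SS (f \<circ> \<phi>) (inv \<phi> t) g \<and> (f \<circ> \<phi>) (g (inv \<phi> t)) = Some v"
    then obtain g where "g \<in> U" "SS (f \<circ> \<phi>) (inv \<phi> t) g" "(f \<circ> \<phi>) (g (inv \<phi> t)) = Some v" by blast
    then show "\<exists>g\<in>U. SS f t g \<and> f (g t) = Some v"
      using SS_conj[OF p _ t] conj_U[OF p] val by metis
  next
    fix v assume "\<exists>g\<in>U. SS f t g \<and> f (g t) = Some v"
    then obtain g where g: "g \<in> U" "SS f t g" "f (g t) = Some v" by blast
    have "SS (f \<circ> \<phi>) (inv \<phi> t) (inv \<phi> \<circ> g \<circ> \<phi>) \<longleftrightarrow> SS f t (\<phi> \<circ> (inv \<phi> \<circ> g \<circ> \<phi>) \<circ> inv \<phi>)"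
      by (rule SS_conj[OF p conj_U'[OF p g(1)] t])
    then have "SS (f \<circ> \<phi>) (inv \<phi> t) (inv \<phi> \<circ> g \<circ> \<phi>)"
      using g(2) by (simp only: conj_back[OF p])
    moreover have "(f \<circ> \<phi>) ((inv \<phi> \<circ> g \<circ> \<phi>) (inv \<phi> t)) = Some v"
      using g(3) U_f_inv[OF p] by simp
    ultimately show "\<exists>g\<in>U. SS (f \<circ> \<phi>) (inv \<phi> t) g \<and> (f \<circ> \<phi>) (g (inv \<phi> t)) = Some v"
      using conj_U'[OF p g(1)] by blast
  qed
qed

lemma Ext_comp:
  assumes p: "\<phi> \<in> U" and t: "t \<in> I"
  shows "Ext (f \<circ> \<phi>) (inv \<phi> t) G \<psi> \<longleftrightarrow> Ext f t G (\<psi> \<circ> inv \<phi>)"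
  unfolding Ext_def using transport[OF p t, of "\<lambda>w. f w = Some (G ((\<psi> \<circ> inv \<phi>) w))"] U_inv_f[OF p] by simp

lemma Es_comp:
  assumes p: "\<phi> \<in> U" and t: "t \<in> I" and d: "dom f = {x\<in>I. x < t}"
  shows "Es S (f \<circ> \<phi>) = Es S f"
proof -
  have T1: "Tf f = t" using Tf_eq[OF t d] .
  have T2: "Tf (f \<circ> \<phi>) = inv \<phi> t" using Tf_eq[OF U_inv_in[OF p t] dom_comp[OF p t d]] .
  have "(\<exists>\<psi>\<in>U. Ext (f \<circ> \<phi>) (inv \<phi> t) G \<psi>) \<longleftrightarrow> (\<exists>\<psi>\<in>U. Ext f t G \<psi>)" for G
  proof
    assume "\<exists>\<psi>\<in>U. Ext (f \<circ> \<phi>) (inv \<phi> t) G \<psi>"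
    then obtain \<psi> where "\<psi> \<in> U" "Ext (f \<circ> \<phi>) (inv \<phi> t) G \<psi>" by blast
    then show "\<exists>\<psi>\<in>U. Ext f t G \<psi>" using Ext_comp[OF p t] U_comp U_inv p by blast
  next
    assume "\<exists>\<psi>\<in>U. Ext f t G \<psi>"
    then obtain \<psi> where ps: "\<psi> \<in> U" "Ext f t G \<psi>" by blast
    have "\<psi> \<circ> \<phi> \<circ> inv \<phi> = \<psi>" by (auto simp: fun_eq_iff U_f_inv[OF p])
    have "Ext (f \<circ> \<phi>) (inv \<phi> t) G (\<psi> \<circ> \<phi>) \<longleftrightarrow> Ext f t G (\<psi> \<circ> \<phi> \<circ> inv \<phi>)"
      by (rule Ext_comp[OF p t])
    then have "Ext (f \<circ> \<phi>) (inv \<phi> t) G (\<psi> \<circ> \<phi>)" using ps(2) by (simp only: \<open>\<psi> \<circ> \<phi> \<circ> inv \<phi> = \<psi>\<close>)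
    then show "\<exists>\<psi>\<in>U. Ext (f \<circ> \<phi>) (inv \<phi> t) G \<psi>" using U_comp[OF ps(1) p] by blast
  qed
  then show ?thesis unfolding Es_def T1 T2 by simp
qed

lemma Xs_comp:
  assumes p: "\<phi> \<in> U" and t: "t \<in> I" and d: "dom f = {x\<in>I. x < t}"
  shows "Xs S r (f \<circ> \<phi>) = Xs S r f"
proof -
  have T1: "Tf f = t" using Tf_eq[OF t d] .
  have T2: "Tf (f \<circ> \<phi>) = inv \<phi> t" using Tf_eq[OF U_inv_in[OF p t] dom_comp[OF p t d]] .
  have G: "Gf S r (f \<circ> \<phi>) = Gf S r f" unfolding Gf_def using Es_comp[OF p t d] by simp
  show ?thesis unfolding Xs_def T1 T2 G
  proof (intro set_eqI iffI; simp only: mem_Collect_eq)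
    fix x assume "\<exists>\<psi>. x = \<psi> (inv \<phi> t) \<and> \<psi> \<in> U \<and> Ext (f \<circ> \<phi>) (inv \<phi> t) (Gf S r f) \<psi>"
    then obtain \<psi> where ps: "x = \<psi> (inv \<phi> t)" "\<psi> \<in> U" "Ext (f \<circ> \<phi>) (inv \<phi> t) (Gf S r f) \<psi>" by blast
    have "x = (\<psi> \<circ> inv \<phi>) t" using ps by simp
    moreover have "\<psi> \<circ> inv \<phi> \<in> U" using U_comp[OF ps(2) U_inv[OF p]] .
    moreover have "Ext f t (Gf S r f) (\<psi> \<circ> inv \<phi>)" using Ext_comp[OF p t] ps by blast
    ultimately show "\<exists>\<psi>. x = \<psi> t \<and> \<psi> \<in> U \<and> Ext f t (Gf S r f) \<psi>" by blast
  next
    fix x assume "\<exists>\<psi>. x = \<psi> t \<and> \<psi> \<in> U \<and> Ext f t (Gf S r f) \<psi>"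
    then obtain \<psi> where ps: "x = \<psi> t" "\<psi> \<in> U" "Ext f t (Gf S r f) \<psi>" by blast
    have e: "\<psi> \<circ> \<phi> \<circ> inv \<phi> = \<psi>" by (auto simp: fun_eq_iff U_f_inv[OF p])
    have "x = (\<psi> \<circ> \<phi>) (inv \<phi> t)" using ps U_f_inv[OF p] by simp
    moreover have "\<psi> \<circ> \<phi> \<in> U" using U_comp[OF ps(2) p] .
    moreover have "Ext (f \<circ> \<phi>) (inv \<phi> t) (Gf S r f) (\<psi> \<circ> \<phi>) \<longleftrightarrow> Ext f t (Gf S r f) (\<psi> \<circ> \<phi> \<circ> inv \<phi>)"
      by (rule Ext_comp[OF p t])
    then have "Ext (f \<circ> \<phi>) (inv \<phi> t) (Gf S r f) (\<psi> \<circ> \<phi>)" using ps(3) by (simp only: e)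
    ultimately show "\<exists>\<psi>'. x = \<psi>' (inv \<phi> t) \<and> \<psi>' \<in> U \<and> Ext (f \<circ> \<phi>) (inv \<phi> t) (Gf S r f) \<psi>'" by blast
  qed
qed

lemma Pr_anonymous:
  assumes f: "f \<in> pred_domain I S" and p: "\<phi> \<in> U"
  shows "Pr S r f = Pr S r (f \<circ> \<phi>)"
proof -
  obtain t where t: "t \<in> I" and d: "dom f = {x\<in>I. x < t}" using f by (auto simp: pred_domain_def)
  have G: "Gf S r (f \<circ> \<phi>) = Gf S r f" unfolding Gf_def using Es_comp[OF p t d] by simp
  show ?thesis unfolding Pr_def caseA_comp[OF p t d] Vs_comp[OF p t d] Xs_comp[OF p t d] G ..
qed


lemma restr_Tf: assumes "t \<in> I" shows "Tf (restr_to I F t) = t"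
proof -
  have d: "dom (restr_to I F t) = {x\<in>I. x<t}" by (rule restr_dom)
  show ?thesis by (rule Tf_eq[OF assms d])
qed

lemma caseA_restr:
  assumes t: "t \<in> I"
  shows "caseA (restr_to I F t) \<longleftrightarrow> (\<exists>g\<in>U. g t < t \<and> Sim F t g)"
proof -
  have "SS (restr_to I F t) t g \<longleftrightarrow> g t < t \<and> Sim F t g" if g: "g \<in> U" for g
  proof
    assume "SS (restr_to I F t) t g"
    then show "g t < t \<and> Sim F t g" unfolding SS_def Sim_def
      by (auto simp: restr_val U_in[OF g] split: if_splits)
  next
    assume a: "g t < t \<and> Sim F t g"
    have "g z < t" if "z \<in> I" "z < t" for z
      using U_less_iff[OF g that(1) t] that a by (meson less_trans)
    then show "SS (restr_to I F t) t g" using a unfolding SS_def Sim_def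
      by (auto simp: restr_val U_in[OF g])
  qed
  then show ?thesis unfolding caseA_def restr_Tf[OF t] by blast
qed

lemma Ext_restr:
  assumes t: "t \<in> I"
  shows "Ext (restr_to I F t) t G \<phi> \<longleftrightarrow> (\<forall>z\<in>I. z < t \<longrightarrow> F z = G (\<phi> z))"
  unfolding Ext_def by (rule Ext_restr_g)

lemma Es_ne:
  assumes f: "f \<in> pred_domain I S" and S: "S \<noteq> {}"
  shows "Es S f \<noteq> {}"
proof -
  obtain t where t: "t \<in> I" and d: "dom f = {x\<in>I. x < t}" and rn: "ran f \<subseteq> S" using f by (auto simp: pred_domain_def)
  obtain s0 where s0: "s0 \<in> S" using S by auto
  define G where "G x = (case f x of Some v \<Rightarrow> v | None \<Rightarrow> s0)" for x
  have "G x \<in> S" for x using rn s0 by (auto simp: G_def ran_def split: option.splits)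
  moreover have "Ext f (Tf f) G id"
    unfolding Tf_eq[OF t d] Ext_def
  proof (intro ballI impI)
    fix z assume "z \<in> I" "z < t"
    then have "z \<in> dom f" using d by simp
    then obtain v where "f z = Some v" by auto
    then show "f z = Some (G (id z))" by (simp add: G_def)
  qed
  ultimately show ?thesis unfolding Es_def using U_id by blast
qed

context
  fixes r :: "(real \<Rightarrow> 's) rel" and S :: "'s set"
  assumes wo: "Well_order r" and fr: "Field r = UNIV" and Sne: "S \<noteq> {}"
begin

lemma wor: "wo_rel r" using wo by (simp add: wo_rel_def)

lemma Gf_in: "Es S f \<noteq> {} \<Longrightarrow> Gf S r f \<in> Es S f"
  unfolding Gf_def using wo_rel.minim_in[OF wor] fr by blast

lemma Gf_least: "G \<in> Es S f \<Longrightarrow> (Gf S r f, G) \<in> r"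
  unfolding Gf_def using wo_rel.minim_least[OF wor] fr by blast

lemma Pr_in_S:
  assumes f: "f \<in> pred_domain I S"
  shows "Pr S r f \<in> S"
proof (cases "caseA f")
  case True
  obtain t where t: "t \<in> I" and d: "dom f = {x\<in>I. x < t}" and rn: "ran f \<subseteq> S" using f by (auto simp: pred_domain_def)
  obtain g where g: "g \<in> U" "SS f (Tf f) g" using True by (auto simp: caseA_def)
  have T: "Tf f = t" using Tf_eq[OF t d] .
  have "g t \<in> dom f" using d g U_in[OF g(1) t] by (auto simp: SS_def T)
  then obtain v where v: "f (g t) = Some v" by auto
  have "v \<in> Vs f" unfolding Vs_def T using g v T by auto
  then have "(SOME v. v \<in> Vs f) \<in> Vs f" by (rule someI)
  then obtain g' w where "f (g' (Tf f)) = Some w" "w = (SOME v. v \<in> Vs f)" unfolding Vs_def by blast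
  then have "(SOME v. v \<in> Vs f) \<in> ran f" by (auto simp: ran_def)
  then show ?thesis using True rn by (auto simp: Pr_def)
next
  case False
  have "Gf S r f \<in> Es S f" using Gf_in Es_ne[OF f Sne] by blast
  then show ?thesis using False by (auto simp: Pr_def Es_def)
qed


lemma Es_restr:
  assumes t: "t \<in> I"
  shows "G \<in> Es S (restr_to I F t) \<longleftrightarrow> (\<forall>x. G x \<in> S) \<and> (\<exists>\<phi>\<in>U. \<forall>z\<in>I. z < t \<longrightarrow> F z = G (\<phi> z))"
  unfolding Es_def restr_Tf[OF t] Ext_restr[OF t] by simp

lemma Es_mono:
  assumes t1: "t1 \<in> I" and t2: "t2 \<in> I" and lt12: "t1 < t2"
  shows "Es S (restr_to I F t2) \<subseteq> Es S (restr_to I F t1)"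
proof
  fix G assume "G \<in> Es S (restr_to I F t2)"
  then have "(\<forall>x. G x \<in> S) \<and> (\<exists>\<phi>\<in>U. \<forall>z\<in>I. z < t2 \<longrightarrow> F z = G (\<phi> z))" using Es_restr[OF t2] by blast
  then have "(\<forall>x. G x \<in> S) \<and> (\<exists>\<phi>\<in>U. \<forall>z\<in>I. z < t1 \<longrightarrow> F z = G (\<phi> z))" using lt12 by (meson less_trans)
  then show "G \<in> Es S (restr_to I F t1)" using Es_restr[OF t1] by blast
qed

lemma Pr_good:
  assumes FS: "\<forall>x\<in>I. F x \<in> S"
  shows "{t\<in>I. Pr S r (restr_to I F t) \<noteq> F t} \<in> null_sets lebesgue"
proof -
  define ff where "ff t = restr_to I F t" for t
  define W where "W = {t\<in>I. \<not> caseA (ff t) \<and> (\<forall>t'\<in>I. t < t' \<longrightarrow> Gf S r (ff t') \<noteq> Gf S r (ff t))}"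
  have ffD: "ff t \<in> pred_domain I S" if "t \<in> I" for t unfolding ff_def using restr_D[OF that FS] .
  have Gin: "Gf S r (ff t) \<in> Es S (ff t)" if "t \<in> I" for t using Gf_in Es_ne[OF ffD[OF that] Sne] by blast
  have mono: "(Gf S r (ff t1), Gf S r (ff t2)) \<in> r" if "t1 \<in> I" "t2 \<in> I" "t1 < t2" for t1 t2
    using Gf_least Gin[OF that(2)] Es_mono[OF that] unfolding ff_def by blast
  have antis: "antisym r" using wo_rel.ANTISYM[OF wor] .
  have cW: "countable W"
  proof (rule countable_right_gap, intro ballI)
    fix t assume tW: "t \<in> W"
    show "\<exists>u>t. \<forall>x'\<in>W. t < x' \<longrightarrow> u \<le> x'"
    proof (cases "\<exists>t'\<in>W. t < t'")
      case False then show ?thesis by (intro exI[of _ "t + 1"]) auto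
    next
      case True
      define Z where "Z = {Gf S r (ff t') | t'. t' \<in> W \<and> t < t'}"
      have Zne: "Z \<noteq> {}" using True by (auto simp: Z_def)
      have "wo_rel.minim r Z \<in> Z" using wo_rel.minim_in[OF wor] fr Zne by blast
      then obtain s where s: "s \<in> W" "t < s" "wo_rel.minim r Z = Gf S r (ff s)" by (auto simp: Z_def)
      have "\<forall>x'\<in>W. t < x' \<longrightarrow> s \<le> x'"
      proof (intro ballI impI)
        fix x' assume x': "x' \<in> W" "t < x'"
        show "s \<le> x'"
        proof (rule ccontr)
          assume "\<not> s \<le> x'"
          then have lt: "x' < s" by simp
          have "Gf S r (ff x') \<in> Z" using x' by (auto simp: Z_def)
          then have r1: "(Gf S r (ff s), Gf S r (ff x')) \<in> r" using wo_rel.minim_least[OF wor] fr s(3) by (metis top_greatest)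
          have r2: "(Gf S r (ff x'), Gf S r (ff s)) \<in> r" using mono x' s lt W_def by blast
          have "Gf S r (ff x') = Gf S r (ff s)" using antis r1 r2 by (auto simp: antisym_def)
          moreover have "Gf S r (ff s) \<noteq> Gf S r (ff x')" using x'(1) s(1) lt W_def by auto
          ultimately show False by simp
        qed
      qed
      then show ?thesis using s(2) by blast
    qed
  qed
  have sub: "{t\<in>I. Pr S r (restr_to I F t) \<noteq> F t} \<subseteq> Bset F \<union> W"
  proof
    fix t assume "t \<in> {t\<in>I. Pr S r (restr_to I F t) \<noteq> F t}"
    then have t: "t \<in> I" and err: "Pr S r (ff t) \<noteq> F t" by (auto simp: ff_def)
    have Tt: "Tf (ff t) = t" unfolding ff_def using restr_Tf[OF t] .
    show "t \<in> Bset F \<union> W"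
    proof (cases "caseA (ff t)")
      case True
      then obtain g where g: "g \<in> U" "SS (ff t) t g" by (auto simp: caseA_def Tt)
      have gt: "g t < t" using g by (simp add: SS_def)
      have "ff t (g t) = Some (F (g t))" using gt U_in[OF g(1) t] by (simp add: ff_def restr_val)
      then have "F (g t) \<in> Vs (ff t)" unfolding Vs_def Tt using g by blast
      then have "(SOME v. v \<in> Vs (ff t)) \<in> Vs (ff t)" by (rule someI)
      then obtain g' where g': "g' \<in> U" "SS (ff t) t g'" "ff t (g' t) = Some (SOME v. v \<in> Vs (ff t))"
        unfolding Vs_def Tt by blast
      have g'A: "g' t < t \<and> Sim F t g'" using caseA_restr[OF t] g' unfolding ff_def
      proof -
        have "\<And>g. g \<in> U \<Longrightarrow> SS (restr_to I F t) t g \<Longrightarrow> g t < t \<and> Sim F t g"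
          unfolding SS_def Sim_def by (auto simp: restr_val U_in split: if_splits)
        then show ?thesis using g' unfolding ff_def by blast
      qed
      have "ff t (g' t) = Some (F (g' t))" using g'A U_in[OF g'(1) t] by (simp add: ff_def restr_val)
      then have "(SOME v. v \<in> Vs (ff t)) = F (g' t)" using g'(3) by simp
      then have "F (g' t) \<noteq> F t" using err True by (simp add: Pr_def)
      then have "t \<in> Bset F" using t g'(1) g'A unfolding Bset_def by blast
      then show ?thesis by simp
    next
      case False
      show ?thesis
      proof (rule ccontr)
        assume "t \<notin> Bset F \<union> W"
        then obtain t' where t': "t' \<in> I" "t < t'" "Gf S r (ff t') = Gf S r (ff t)"
          using False t unfolding W_def by blast
        let ?G = "Gf S r (ff t)"
        obtain \<phi>' where p': "\<phi>' \<in> U" "\<forall>z\<in>I. z < t' \<longrightarrow> F z = ?G (\<phi>' z)"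
          using Gin[OF t'(1)] Es_restr[OF t'(1)] t'(3) unfolding ff_def by auto
        have ext': "Ext (ff t) (Tf (ff t)) ?G \<phi>'"
          unfolding ff_def restr_Tf[OF t] Ext_restr[OF t] using p' t'(2) unfolding ff_def by (meson less_trans)
        have "\<phi>' t \<in> Xs S r (ff t)" unfolding Xs_def using p' ext' Tt by auto
        then have "(SOME x. x \<in> Xs S r (ff t)) \<in> Xs S r (ff t)" by (rule someI)
        then obtain \<phi> where p: "(SOME x. x \<in> Xs S r (ff t)) = \<phi> t" "\<phi> \<in> U" "Ext (ff t) t ?G \<phi>"
          unfolding Xs_def Tt by blast
        have pe: "\<forall>z\<in>I. z < t \<longrightarrow> F z = ?G (\<phi> z)" using p(3) Ext_restr[OF t] unfolding ff_def by blast
        have notA: "\<not> (\<exists>g\<in>U. g t < t \<and> Sim F t g)" using False caseA_restr[OF t] unfolding ff_def by blast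
        have same: "\<phi> t = \<phi>' t"
        proof (rule ccontr)
          assume ne: "\<phi> t \<noteq> \<phi>' t"
          have mk: "False" if a: "a \<in> U" "b \<in> U" "a t < b t"
              and ea: "\<forall>z\<in>I. z < t \<longrightarrow> F z = ?G (a z)" and eb: "\<forall>z\<in>I. z < t \<longrightarrow> F z = ?G (b z)" for a b
          proof -
            let ?g = "inv b \<circ> a"
            have gU: "?g \<in> U" using U_comp[OF U_inv[OF a(2)] a(1)] .
            have atI: "a t \<in> I" "b t \<in> I" using U_in a t by auto
            have gt: "?g t < t"
            proof -
              have "inv b (a t) < inv b (b t)" using U_less_iff[OF U_inv[OF a(2)] atI] a(3) by simp
              then show ?thesis using U_inv_f[OF a(2)] by simp
            qed
            have "Sim F t ?g" unfolding Sim_def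
            proof (intro ballI impI)
              fix z assume z: "z \<in> I" "z < t"
              have gz: "?g z < t" using U_less_iff[OF gU z(1) t] z gt by (meson less_trans)
              have gzI: "?g z \<in> I" using U_in[OF gU z(1)] .
              have "F (?g z) = ?G (b (?g z))" using eb gz gzI by blast
              also have "b (?g z) = a z" using U_f_inv[OF a(2)] by simp
              also have "?G (a z) = F z" using ea z by simp
              finally show "F (?g z) = F z" .
            qed
            then show False using notA gU gt by blast
          qed
          have pe': "\<forall>z\<in>I. z < t \<longrightarrow> F z = ?G (\<phi>' z)" using p'(2) t'(2) by (meson less_trans)
          from ne consider "\<phi> t < \<phi>' t" | "\<phi>' t < \<phi> t" by linarith
          then show False
          proof cases
            case 1 from mk[OF p(2) p'(1) 1 pe pe'] show False .
          next
            case 2 from mk[OF p'(1) p(2) 2 pe' pe] show False .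
          qed
        qed
        have "Pr S r (ff t) = ?G (\<phi>' t)" using False p(1) same by (simp add: Pr_def)
        also have "?G (\<phi>' t) = F t" using p'(2) t t'(2) by simp
        finally show False using err by simp
      qed
    qed
  qed
  have "countable (Bset F \<union> W)" using Bset_countable cW by blast
  then have "countable {t\<in>I. Pr S r (restr_to I F t) \<noteq> F t}" using sub countable_subset by blast
  then show ?thesis using null_sets_completionI countable_imp_null_set_lborel by blast
qed

end

end

theorem theorem1p5:
  fixes I :: "real set" and U :: "(real \<Rightarrow> real) set" and S :: "'s set"
  assumes "open I" and "is_interval I" and "I \<noteq> {}"
    and "is_subgroup_homeo I U"
    and "\<forall>g\<in>commutator_subgroup U. g \<noteq> id \<longrightarrow> (\<forall>x\<in>I. g x \<noteq> x)"
    and "\<forall>g\<in>U. g \<noteq> id \<longrightarrow> (\<forall>x\<in>I. \<forall>y\<in>I. g x = x \<and> g y = y \<longrightarrow> x = y)"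
    and "S \<noteq> {}"
  shows "\<exists>P. good_predictor I S P \<and> anonymous I S U P"
proof -
  interpret setting I U
    by (rule setting.intro[OF assms(1) assms(2) assms(3) assms(4) assms(5) assms(6)])
  obtain r :: "(real \<Rightarrow> 's) rel" where wo: "Well_order r" "Field r = UNIV"
  proof -
    from well_ordering[where 'a="real \<Rightarrow> 's"] obtain r0 :: "(real \<Rightarrow> 's) rel" where "Well_order r0 \<and> Field r0 = UNIV" by (elim exE)
    then show ?thesis using that by blast
  qed
  have g: "good_predictor I S (Pr S r)"
    unfolding good_predictor_def is_predictor_def
  proof (intro conjI ballI allI impI)
    fix f assume "f \<in> pred_domain I S"
    then show "Pr S r f \<in> S" by (rule Pr_in_S[OF wo assms(7)])
  next
    fix F :: "real \<Rightarrow> 's" assume "\<forall>x\<in>I. F x \<in> S"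
    then show "{t \<in> I. Pr S r (restr_to I F t) \<noteq> F t} \<in> null_sets lebesgue"
      by (rule Pr_good[OF wo assms(7)])
  qed
  have a: "anonymous I S U (Pr S r)"
    unfolding anonymous_def
  proof (intro ballI)
    fix f \<phi> assume "f \<in> pred_domain I S" "\<phi> \<in> U"
    then show "Pr S r f = Pr S r (f \<circ> \<phi>)" by (rule Pr_anonymous)
  qed
  show ?thesis using g a by (intro exI[of _ "Pr S r"] conjI)
qed

end
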